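(* Let $\mathcal T$ be a finite trajectory set, $\mathcal Z$ a finite context set, $u:\mathcal T\times\mathcal Z\to\mathbb R$, $z_k\in\mathcal Z$, $\epsilon\in[0,1]$, and $P'(z)=(1-\epsilon)\mathbb I\{z=z_k\}+\epsilon R(z)$ for some distribution $R$ on $\mathcal Z$. Let $BC(\tau)=BC_{\delta_{z_k}}(\tau)=\frac1{|\mathcal T|}\sum_{\tau'\in\mathcal T}O_u(\tau,\tau',z_k)$ and $BC'(\tau)=BC_{P'}(\tau)$. For $\alpha'>0$ define distributions on $\mathcal T$ by $p_{z_k}(\tau)=\exp(BC(\tau)/\alpha')/Z$ and $q_{z_k}(\tau)=\exp(BC'(\tau)/\alpha')/Z'$ with $Z=\sum_\tau\exp(BC(\tau)/\alpha')$, $Z'=\sum_\tau\exp(BC'(\tau)/\alpha')$. Then $$\mathrm{KL}(p_{z_k}\,\|\,q_{z_k})\le\frac{\epsilon^2}{2\alpha'^2}.$$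
   Context: $O_u(a,b,z)=\tfrac12$ if $u(a,z)=u(b,z)$, $1$ if $u(a,z)>u(b,z)$, $0$ otherwise. For a distribution $P$ on $\mathcal Z$, $BC_P(a)=\frac{1}{|\mathcal T|}\sum_{b\in\mathcal T}\mathbb E_{z\sim P}[O_u(a,b,z)]$; $\delta_{z_k}$ is the point mass at $z_k$. Interpretation: $p_{z_k}$ approximates the maximum-entropy optimal trajectory distribution (temperature $\alpha'$) for $u(\cdot,z_k)$ and $q_{z_k}$ that for the learned utility trained on data whose contexts follow $P'$, with $\epsilon$ the misassignment probability of the encoder. *)

theory Defs
  imports "HOL-Analysis.Analysis"
begin

definition O_u :: "('t \<Rightarrow> 'z \<Rightarrow> real) \<Rightarrow> 't \<Rightarrow> 't \<Rightarrow> 'z \<Rightarrow> real" where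
  "O_u u a b z = (if u a z = u b z then 1/2 else if u a z > u b z then 1 else 0)"

definition BC :: "'t set \<Rightarrow> 'z set \<Rightarrow> ('t \<Rightarrow> 'z \<Rightarrow> real) \<Rightarrow> ('z \<Rightarrow> real) \<Rightarrow> 't \<Rightarrow> real" where
  "BC T Zs u P a = (1 / real (card T)) * (\<Sum>b\<in>T. (\<Sum>z\<in>Zs. P z * O_u u a b z))"

definition is_dist :: "'z set \<Rightarrow> ('z \<Rightarrow> real) \<Rightarrow> bool" where
  "is_dist Zs R \<longleftrightarrow> (\<forall>z\<in>Zs. 0 \<le> R z) \<and> (\<Sum>z\<in>Zs. R z) = 1"

definition point_mass :: "'z \<Rightarrow> 'z \<Rightarrow> real" where
  "point_mass zk z = (if z = zk then 1 else 0)"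

definition gibbs :: "'t set \<Rightarrow> real \<Rightarrow> ('t \<Rightarrow> real) \<Rightarrow> 't \<Rightarrow> real" where
  "gibbs T \<alpha> f t = exp (f t / \<alpha>) / (\<Sum>s\<in>T. exp (f s / \<alpha>))"

definition KL :: "'t set \<Rightarrow> ('t \<Rightarrow> real) \<Rightarrow> ('t \<Rightarrow> real) \<Rightarrow> real" where
  "KL T p q = (\<Sum>t\<in>T. p t * ln (p t / q t))"

end

theory Submission
  imports Defs "HOL-Probability.Hoeffding"
begin

lemma hoeff_fin:
  fixes w x :: "'t \<Rightarrow> real" and a b l :: real
  assumes fin: "finite T" and w0: "\<And>t. t \<in> T \<Longrightarrow> 0 \<le> w t" and w1: "(\<Sum>t\<in>T. w t) = 1"
    and xab: "\<And>t. t \<in> T \<Longrightarrow> a \<le> x t \<and> x t \<le> b" and l0: "0 \<le> l" and ab: "a < b"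
  shows "(\<Sum>t\<in>T. w t * exp (l * x t)) * exp (- l * (\<Sum>t\<in>T. w t * x t)) \<le> exp (l\<^sup>2 * (b - a)\<^sup>2 / 8)"
proof -
  define m where "m = (\<Sum>t\<in>T. w t * x t)"
  have ma: "a \<le> m"
  proof -
    have "(\<Sum>t\<in>T. w t * a) \<le> m" unfolding m_def
      by (intro sum_mono mult_left_mono) (use xab w0 in auto)
    thus ?thesis by (simp add: sum_distrib_right[symmetric] w1)
  qed
  have mb: "m \<le> b"
  proof -
    have "m \<le> (\<Sum>t\<in>T. w t * b)" unfolding m_def
      by (intro sum_mono mult_left_mono) (use xab w0 in auto)
    thus ?thesis by (simp add: sum_distrib_right[symmetric] w1)
  qed
  have pt: "exp (l * x t) \<le> (b - x t) / (b - a) * exp (l * a) + (x t - a) / (b - a) * exp (l * b)"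
    if t: "t \<in> T" for t
  proof -
    define y where "y = (b - x t) / (b-a)"
    have y: "y \<in> {0..1}"
      using xab[OF t] ab by (auto simp: y_def)
    have "exp (l * ((1 - y) *\<^sub>R b + y *\<^sub>R a)) \<le> (1 - y) * exp (l * b) + y * exp (l * a)"
      using y l0 by (intro convex_onD[OF convex_on_exp]) auto
    also have "(1 - y) *\<^sub>R b + y *\<^sub>R a = x t"
      using ab by (simp add: y_def divide_simps) (simp add: algebra_simps)?
    also have "1 - y = (x t - a) / (b - a)"
      using ab by (simp add: field_simps y_def)
    finally show ?thesis by (simp add: y_def)
  qed
  have "(\<Sum>t\<in>T. w t * exp (l * x t)) \<le>
     (\<Sum>t\<in>T. w t * ((b - x t) / (b - a) * exp (l * a) + (x t - a) / (b - a) * exp (l * b)))"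
    by (intro sum_mono mult_left_mono pt w0)
  also have "\<dots> = (\<Sum>t\<in>T. (w t * b - w t * x t)) / (b - a) * exp (l * a)
       + (\<Sum>t\<in>T. (w t * x t - w t * a)) / (b - a) * exp (l * b)"
    by (simp add: sum_divide_distrib sum_distrib_right sum_distrib_left sum.distrib[symmetric] sum_subtractf[symmetric] ring_distribs diff_divide_distrib add_divide_distrib mult.assoc mult.left_commute)
  also have "\<dots> = (b - m) / (b - a) * exp (l * a) + (m - a) / (b - a) * exp (l * b)"
    by (simp add: sum_subtractf m_def sum_distrib_right[symmetric] w1)
  finally have S: "(\<Sum>t\<in>T. w t * exp (l * x t)) \<le> (b - m) / (b - a) * exp (l * a) + (m - a) / (b - a) * exp (l * b)" .
  define p where "p = (m - a) / (b - a)"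
  define h where "h = l * (b - a)"
  have p0: "0 \<le> p" "p \<le> 1" using ma mb ab by (auto simp: p_def)
  have h0: "0 \<le> h" using l0 ab by (simp add: h_def)
  have pos: "0 < 1 + p * (exp h - 1)"
  proof -
    have "0 \<le> p * (exp h - 1)" using p0 h0 by simp
    thus ?thesis by simp
  qed
  have "(\<Sum>t\<in>T. w t * exp (l * x t)) * exp (- l * m) \<le>
     ((b - m) / (b - a) * exp (l * a) + (m - a) / (b - a) * exp (l * b)) * exp (- l * m)"
    by (intro mult_right_mono S) auto
  also have "\<dots> = (1 - p) * exp (l * (a - m)) + p * exp (l * (b - m))"
    using ab by (simp add: p_def field_simps flip: exp_add)
  also have "l * (a - m) = - h * p" using ab by (simp add: h_def p_def field_simps)
  also have "l * (b - m) = - h * p + h" using ab by (simp add: h_def p_def field_simps)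
  also have "(1 - p) * exp (- h * p) + p * exp (- h * p + h) = exp (- h * p + ln (1 + p * (exp h - 1)))"
  proof -
    have "exp (- h * p + ln (1 + p * (exp h - 1))) = exp (- h * p) * (1 + p * (exp h - 1))"
      using pos by (simp only: exp_add exp_ln mult.commute)
    also have "\<dots> = (1 - p) * exp (- h * p) + p * (exp (- h * p) * exp h)" by (simp add: algebra_simps)
    also have "exp (- h * p) * exp h = exp (- h * p + h)" by (simp only: exp_add)
    finally show ?thesis by simp
  qed
  also have "\<dots> \<le> exp (h\<^sup>2 / 8)"
    using Hoeffdings_lemma_aux[OF h0 p0(1)] by simp
  also have "h\<^sup>2 = l\<^sup>2 * (b - a)\<^sup>2" by (simp add: h_def power_mult_distrib)
  finally show ?thesis by (simp add: m_def)
qed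

lemma gibbs_KL:
  fixes f g :: "'t \<Rightarrow> real"
  assumes fin: "finite T" and ne: "T \<noteq> {}" and al: "\<alpha> > 0" and c: "0 < c"
    and fg: "\<And>t. t \<in> T \<Longrightarrow> \<bar>f t - g t\<bar> \<le> c"
  shows "KL T (gibbs T \<alpha> f) (gibbs T \<alpha> g) \<le> c\<^sup>2 / (2 * \<alpha>\<^sup>2)"
proof -
  define Zf where "Zf = (\<Sum>s\<in>T. exp (f s / \<alpha>))"
  define Zg where "Zg = (\<Sum>s\<in>T. exp (g s / \<alpha>))"
  have Zf: "Zf > 0" unfolding Zf_def using fin ne by (intro sum_pos) auto
  have Zg: "Zg > 0" unfolding Zg_def using fin ne by (intro sum_pos) auto
  define w where "w t = exp (f t / \<alpha>) / Zf" for t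
  define x where "x t = (g t - f t) / \<alpha>" for t
  have w0: "0 \<le> w t" for t using Zf by (simp add: w_def)
  have w1: "(\<Sum>t\<in>T. w t) = 1" using Zf by (simp add: w_def Zf_def sum_divide_distrib[symmetric])
  have xab: "- c / \<alpha> \<le> x t \<and> x t \<le> c / \<alpha>" if "t \<in> T" for t
    using fg[OF that] al by (auto simp: x_def divide_simps abs_le_iff)
  have ab: "- c / \<alpha> < c / \<alpha>" using c al by (simp add: divide_simps)
  have H: "(\<Sum>t\<in>T. w t * exp (1 * x t)) * exp (- 1 * (\<Sum>t\<in>T. w t * x t))
        \<le> exp (1\<^sup>2 * (c / \<alpha> - - c / \<alpha>)\<^sup>2 / 8)"
    by (rule hoeff_fin[OF fin w0 w1 xab _ ab]) auto
  have E: "(\<Sum>t\<in>T. w t * exp (1 * x t)) = Zg / Zf"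
  proof -
    have "(\<Sum>t\<in>T. w t * exp (1 * x t)) = (\<Sum>t\<in>T. exp (g t / \<alpha>) / Zf)"
      by (intro sum.cong refl) (simp add: w_def x_def diff_divide_distrib exp_diff)
    thus ?thesis by (simp add: Zg_def sum_divide_distrib[symmetric])
  qed
  have B: "(c / \<alpha> - - c / \<alpha>)\<^sup>2 / 8 = c\<^sup>2 / (2 * \<alpha>\<^sup>2)"
    by (simp add: power2_eq_square field_simps)
  have H2: "ln (Zg / Zf) - (\<Sum>t\<in>T. w t * x t) \<le> c\<^sup>2 / (2 * \<alpha>\<^sup>2)"
  proof -
    have "exp (ln (Zg / Zf) - (\<Sum>t\<in>T. w t * x t)) = (Zg / Zf) * exp (- 1 * (\<Sum>t\<in>T. w t * x t))"
      using Zf Zg by (simp add: exp_diff exp_minus field_simps)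
    also have "\<dots> \<le> exp (c\<^sup>2 / (2 * \<alpha>\<^sup>2))" using H E B by simp
    finally show ?thesis by simp
  qed
  have L: "ln (gibbs T \<alpha> f t / gibbs T \<alpha> g t) = ln (Zg / Zf) - x t" for t
  proof -
    have "gibbs T \<alpha> f t / gibbs T \<alpha> g t = exp (ln (Zg / Zf) - x t)"
      using Zf Zg by (simp add: gibbs_def Zf_def[symmetric] Zg_def[symmetric] exp_diff exp_add x_def diff_divide_distrib field_simps)
    thus ?thesis by simp
  qed
  have "KL T (gibbs T \<alpha> f) (gibbs T \<alpha> g) = (\<Sum>t\<in>T. w t * (ln (Zg / Zf) - x t))"
    unfolding KL_def L by (simp add: gibbs_def w_def Zf_def)
  also have "\<dots> = ln (Zg / Zf) - (\<Sum>t\<in>T. w t * x t)"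
    by (simp add: right_diff_distrib sum_subtractf sum_distrib_right[symmetric] w1)
  finally show ?thesis using H2 by simp
qed

lemma BC_lin:
  "BC T Zs u (\<lambda>z. (1 - e) * P z + e * R z) a = (1 - e) * BC T Zs u P a + e * BC T Zs u R a"
proof -
  have h: "(\<Sum>b\<in>T. \<Sum>z\<in>Zs. ((1 - e) * P z + e * R z) * O_u u a b z)
     = (1 - e) * (\<Sum>b\<in>T. \<Sum>z\<in>Zs. P z * O_u u a b z) + e * (\<Sum>b\<in>T. \<Sum>z\<in>Zs. R z * O_u u a b z)"
    by (simp add: distrib_right sum.distrib sum_distrib_left mult.assoc)
  have gen: "(1/c)*((1-e)*A + e*B) = (1-e)*((1/c)*A) + e*((1/c)*B)" for c A B :: real
    by (simp add: algebra_simps diff_divide_distrib add_divide_distrib)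
  show ?thesis unfolding BC_def h by (rule gen)
qed

lemma BC_bound:
  assumes "finite T" "T \<noteq> {}" "is_dist Zs P"
  shows "0 \<le> BC T Zs u P a \<and> BC T Zs u P a \<le> 1"
proof -
  have O: "0 \<le> O_u u a b z \<and> O_u u a b z \<le> 1" for b z by (simp add: O_u_def)
  have inner: "0 \<le> (\<Sum>z\<in>Zs. P z * O_u u a b z) \<and> (\<Sum>z\<in>Zs. P z * O_u u a b z) \<le> 1" for b
  proof
    show "0 \<le> (\<Sum>z\<in>Zs. P z * O_u u a b z)"
      using assms(3) O by (intro sum_nonneg) (auto simp: is_dist_def)
    have "(\<Sum>z\<in>Zs. P z * O_u u a b z) \<le> (\<Sum>z\<in>Zs. P z)"
      using assms(3) O by (intro sum_mono) (auto simp: is_dist_def intro: mult_left_le)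
    thus "(\<Sum>z\<in>Zs. P z * O_u u a b z) \<le> 1" using assms(3) by (simp add: is_dist_def)
  qed
  have c: "card T > 0" using assms by (simp add: card_gt_0_iff)
  have "0 \<le> (\<Sum>b\<in>T. \<Sum>z\<in>Zs. P z * O_u u a b z)" using inner by (rule_tac sum_nonneg) auto
  moreover have "(\<Sum>b\<in>T. \<Sum>z\<in>Zs. P z * O_u u a b z) \<le> (\<Sum>b\<in>T. 1)" using inner by (intro sum_mono) auto
  ultimately show ?thesis using c by (simp add: BC_def divide_simps)
qed

theorem mainTheorem7:
  fixes T :: "'t set" and Zs :: "'z set" and u :: "'t \<Rightarrow> 'z \<Rightarrow> real"
    and zk :: 'z and \<epsilon> \<alpha>' :: real and R :: "'z \<Rightarrow> real"
  assumes "finite T" "T \<noteq> {}" "finite Zs" "zk \<in> Zs"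
    and "0 \<le> \<epsilon>" "\<epsilon> \<le> 1"
    and "is_dist Zs R"
    and "\<alpha>' > 0"
  shows "KL T (gibbs T \<alpha>' (BC T Zs u (point_mass zk)))
              (gibbs T \<alpha>' (BC T Zs u (\<lambda>z. (1 - \<epsilon>) * point_mass zk z + \<epsilon> * R z)))
         \<le> \<epsilon>^2 / (2 * \<alpha>'^2)"
proof (cases "\<epsilon> = 0")
  case True
  then show ?thesis
  proof -
    have h: "x * ln (x / x) = 0" for x :: real by (cases "x = 0") auto
    have "KL T p p = 0" for p :: "'t \<Rightarrow> real" unfolding KL_def by (intro sum.neutral ballI h)
    with True show ?thesis by simp
  qed
next
  case False
  hence e: "\<epsilon> > 0" using assms by simp
  have pm: "is_dist Zs (point_mass zk)"
    using assms(3,4) by (simp add: is_dist_def point_mass_def)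
  show ?thesis
  proof (rule gibbs_KL[OF assms(1,2,8) e])
    fix t assume "t \<in> T"
    have b1: "0 \<le> BC T Zs u (point_mass zk) t \<and> BC T Zs u (point_mass zk) t \<le> 1"
      by (rule BC_bound[OF assms(1,2) pm])
    have b2: "0 \<le> BC T Zs u R t \<and> BC T Zs u R t \<le> 1"
      by (rule BC_bound[OF assms(1,2,7)])
    have "BC T Zs u (point_mass zk) t - BC T Zs u (\<lambda>z. (1 - \<epsilon>) * point_mass zk z + \<epsilon> * R z) t
       = \<epsilon> * (BC T Zs u (point_mass zk) t - BC T Zs u R t)"
      by (simp only: BC_lin) (simp add: algebra_simps)
    also have "\<bar>\<dots>\<bar> \<le> \<epsilon> * 1"
    proof -
      have "\<bar>BC T Zs u (point_mass zk) t - BC T Zs u R t\<bar> \<le> 1" using b1 b2 by auto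
      thus ?thesis unfolding abs_mult using e by (simp add: mult_left_le)
    qed
    finally show "\<bar>BC T Zs u (point_mass zk) t - BC T Zs u (\<lambda>z. (1 - \<epsilon>) * point_mass zk z + \<epsilon> * R z) t\<bar> \<le> \<epsilon>"
      by simp
  qed
qed

end
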